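(* Any decomposable sum-product network (SPN) can be represented by a stochastic context-free And-Or grammar whose size is linear in the size of the SPN, in the sense that for every assignment to the random variables, the marginal probability computed by the And-Or grammar equals the probability computed by the SPN.
   Context: A sum-product network over random variables $x_1,\dots,x_d$ is a rooted directed acyclic graph whose leaves are indicators $x_i$ or $\bar x_i$ and whose non-leaf nodes are sum nodes (computing a weighted sum of their children) or product nodes (computing the product of their children); its value is that of its root. The scope of a node is the set of variables appearing in its descendant leaves. For validity, children of a sum node have identical scopes and children of a product node contain no conflicting leaves ($x_i$ in one, $\bar x_i$ in another). An SPN is decomposable if the children of every product node have disjoint scopes. The probability computed by the SPN refers to its (normalized) distribution. A stochastic context-free And-Or grammar (AOG) is a tuple $\langle \Sigma, N, S, \theta, R\rangle$: terminal nodes $\Sigma$; nonterminal nodes $N$ partitioned into And-nodes and Or-nodes; start symbol $S$; $\theta$ maps each instance of a node $x$ to a parameter $\theta_x$; $R$ is partitioned into And-rules and Or-rules. An And-rule $\langle A\to\{x_1,\dots,x_n\}, t, f\rangle$ ($n\ge2$) has a parameter relation $t(\theta_{x_1},\dots,\theta_{x_n})$ and parameter function $\theta_A=f(\theta_{x_1},\dots,\theta_{x_n})$; each And-node heads exactly one And-rule. An Or-rule $\langle O\to x, p\rangle$ has conditional probability $p$ and requires $\theta_O=\theta_x$. A parse of a data sample (a set of terminal instances) is a tree rooted at an instance of $S$ with leaves exactly the sample, And-node instances expanded by their And-rule subject to the parameter relation/function, Or-node instances by exactly one Or-rule with equal parameter; its probability is the product of used Or-rule probabilities, and the marginal probability of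 a sample is the sum over its parses. *)

theory Defs
  imports "HOL-Analysis.Analysis"
begin

text \<open>Variables are x_0, ..., x_(d-1) (0-based). A leaf Leaf i True is the indicator x_i,
 Leaf i False is the negated indicator (bar x_i).\<close>

datatype spn_node = Leaf nat bool | Sum "(nat \<times> real) list" | Prod "nat list"

record spn =
  spn_nodes :: "nat set"
  spn_root  :: nat
  spn_lbl   :: "nat \<Rightarrow> spn_node"

fun node_children :: "spn_node \<Rightarrow> nat list" where
  "node_children (Leaf i b) = []"
| "node_children (Sum cs) = map fst cs"
| "node_children (Prod cs) = cs"

text \<open>Edge relation, oriented (child, parent).\<close>
definition spn_edges :: "spn \<Rightarrow> (nat \<times> nat) set" where
  "spn_edges S = {(c, n). n \<in> spn_nodes S \<and> c \<in> set (node_children (spn_lbl S n))}"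

definition spn_leaves :: "spn \<Rightarrow> nat \<Rightarrow> (nat \<times> bool) set" where
  "spn_leaves S n = {(i, b). \<exists>m. (m, n) \<in> (spn_edges S)\<^sup>* \<and> spn_lbl S m = Leaf i b}"

definition spn_scope :: "spn \<Rightarrow> nat \<Rightarrow> nat set" where
  "spn_scope S n = fst ` spn_leaves S n"

definition spn_wf :: "spn \<Rightarrow> nat \<Rightarrow> bool" where
  "spn_wf S d \<longleftrightarrow>
     finite (spn_nodes S) \<and> spn_root S \<in> spn_nodes S \<and>
     wf (spn_edges S) \<and>
     (\<forall>n \<in> spn_nodes S.
        set (node_children (spn_lbl S n)) \<subseteq> spn_nodes S \<and>
        (case spn_lbl S n of
           Leaf i b \<Rightarrow> i < d
         | Sum cs \<Rightarrow> cs \<noteq> [] \<and> (\<forall>(c, w) \<in> set cs. 0 \<le> w)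
         | Prod cs \<Rightarrow> cs \<noteq> [])) \<and>
     spn_scope S (spn_root S) = {..<d}"

definition spn_valid :: "spn \<Rightarrow> bool" where
  "spn_valid S \<longleftrightarrow>
     (\<forall>n \<in> spn_nodes S.
        (\<forall>cs. spn_lbl S n = Sum cs \<longrightarrow>
           (\<forall>c \<in> fst ` set cs. \<forall>c' \<in> fst ` set cs. spn_scope S c = spn_scope S c')) \<and>
        (\<forall>cs. spn_lbl S n = Prod cs \<longrightarrow>
           (\<forall>j < length cs. \<forall>k < length cs. j \<noteq> k \<longrightarrow>
              (\<forall>i. \<not> ((i, True) \<in> spn_leaves S (cs ! j) \<and> (i, False) \<in> spn_leaves S (cs ! k))))))"

definition spn_decomposable :: "spn \<Rightarrow> bool" where
  "spn_decomposable S \<longleftrightarrow>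
     (\<forall>n \<in> spn_nodes S. \<forall>cs. spn_lbl S n = Prod cs \<longrightarrow>
        (\<forall>j < length cs. \<forall>k < length cs. j \<noteq> k \<longrightarrow>
           spn_scope S (cs ! j) \<inter> spn_scope S (cs ! k) = {}))"

inductive spn_val :: "spn \<Rightarrow> bool list \<Rightarrow> nat \<Rightarrow> real \<Rightarrow> bool" for S xs where
  leaf: "spn_lbl S n = Leaf i b \<Longrightarrow> spn_val S xs n (if xs ! i = b then 1 else 0)"
| sum: "spn_lbl S n = Sum cs \<Longrightarrow> list_all2 (spn_val S xs) (map fst cs) vs \<Longrightarrow>
        spn_val S xs n (\<Sum>j<length cs. snd (cs ! j) * vs ! j)"
| prod: "spn_lbl S n = Prod cs \<Longrightarrow> list_all2 (spn_val S xs) cs vs \<Longrightarrow>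
        spn_val S xs n (prod_list vs)"

definition spn_value :: "spn \<Rightarrow> bool list \<Rightarrow> nat \<Rightarrow> real" where
  "spn_value S xs n = (THE v. spn_val S xs n v)"

definition spn_prob :: "spn \<Rightarrow> nat \<Rightarrow> bool list \<Rightarrow> real" where
  "spn_prob S d xs = spn_value S xs (spn_root S) /
      (\<Sum>ys \<in> {ys. length ys = d}. spn_value S ys (spn_root S))"

definition spn_size :: "spn \<Rightarrow> nat" where
  "spn_size S = card (spn_nodes S) + (\<Sum>n \<in> spn_nodes S. length (node_children (spn_lbl S n)))"

text \<open>Terminal nodes are literals (i, b) (x_i if b, bar x_i otherwise); nonterminal nodes
 are natural numbers. 'p is the type of parameters.\<close>
datatype gsym = Tm "nat \<times> bool" | Nt nat

record 'p aog =
  aog_terms :: "(nat \<times> bool) set"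
  aog_ands  :: "nat set"
  aog_ors   :: "nat set"
  aog_start :: nat
  aog_and_rule :: "nat \<Rightarrow> gsym list \<times> ('p list \<Rightarrow> bool) \<times> ('p list \<Rightarrow> 'p)"
  aog_or_rules :: "(nat \<times> gsym \<times> real) set"

definition aog_symbols :: "'p aog \<Rightarrow> gsym set" where
  "aog_symbols G = Tm ` aog_terms G \<union> Nt ` (aog_ands G \<union> aog_ors G)"

definition aog_wf :: "'p aog \<Rightarrow> bool" where
  "aog_wf G \<longleftrightarrow>
     finite (aog_terms G) \<and> finite (aog_ands G) \<and> finite (aog_ors G) \<and>
     aog_ands G \<inter> aog_ors G = {} \<and>
     aog_start G \<in> aog_ands G \<union> aog_ors G \<and>
     (\<forall>A \<in> aog_ands G. 2 \<le> length (fst (aog_and_rule G A)) \<and>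
        distinct (fst (aog_and_rule G A)) \<and>
        set (fst (aog_and_rule G A)) \<subseteq> aog_symbols G) \<and>
     finite (aog_or_rules G) \<and>
     (\<forall>(B, x, p) \<in> aog_or_rules G. B \<in> aog_ors G \<and> x \<in> aog_symbols G \<and> 0 \<le> p) \<and>
     (\<forall>B \<in> aog_ors G. (\<Sum>r \<in> {r \<in> aog_or_rules G. fst r = B}. snd (snd r)) = 1)"

definition aog_size :: "'p aog \<Rightarrow> nat" where
  "aog_size G = card (aog_terms G) + card (aog_ands G) + card (aog_ors G)
     + (\<Sum>A \<in> aog_ands G. length (fst (aog_and_rule G A))) + card (aog_or_rules G)"

text \<open>Parse trees: nodes are instances of grammar nodes carrying a parameter. An Or-node
 instance records the Or-rule (O -> x, p) it is expanded by.\<close>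
datatype 'p ptree =
    PT "nat \<times> bool" 'p
  | PAnd nat 'p "'p ptree list"
  | POr nat 'p gsym real "'p ptree"

fun psym :: "'p ptree \<Rightarrow> gsym" where
  "psym (PT l th) = Tm l"
| "psym (PAnd A th ts) = Nt A"
| "psym (POr B th x p t) = Nt B"

fun ptheta :: "'p ptree \<Rightarrow> 'p" where
  "ptheta (PT l th) = th"
| "ptheta (PAnd A th ts) = th"
| "ptheta (POr B th x p t) = th"

fun pleaves :: "'p ptree \<Rightarrow> ((nat \<times> bool) \<times> 'p) list" where
  "pleaves (PT l th) = [(l, th)]"
| "pleaves (PAnd A th ts) = concat (map pleaves ts)"
| "pleaves (POr B th x p t) = pleaves t"

fun pprob :: "'p ptree \<Rightarrow> real" where
  "pprob (PT l th) = 1"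
| "pprob (PAnd A th ts) = prod_list (map pprob ts)"
| "pprob (POr B th x p t) = p * pprob t"

fun pvalid :: "'p aog \<Rightarrow> 'p ptree \<Rightarrow> bool" where
  "pvalid G (PT l th) = (l \<in> aog_terms G)"
| "pvalid G (PAnd A th ts) =
     (A \<in> aog_ands G \<and>
      map psym ts = fst (aog_and_rule G A) \<and>
      fst (snd (aog_and_rule G A)) (map ptheta ts) \<and>
      th = snd (snd (aog_and_rule G A)) (map ptheta ts) \<and>
      list_all (pvalid G) ts)"
| "pvalid G (POr B th x p t) =
     (B \<in> aog_ors G \<and> (B, x, p) \<in> aog_or_rules G \<and> psym t = x \<and>
      th = ptheta t \<and> pvalid G t)"

definition aog_parses :: "'p aog \<Rightarrow> ((nat \<times> bool) \<times> 'p) set \<Rightarrow> 'p ptree set" where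
  "aog_parses G D = {t. pvalid G t \<and> psym t = Nt (aog_start G) \<and>
                        distinct (pleaves t) \<and> set (pleaves t) = D}"

definition aog_marginal :: "'p aog \<Rightarrow> ((nat \<times> bool) \<times> 'p) set \<Rightarrow> real" where
  "aog_marginal G D = (\<Sum>\<^sub>\<infinity>t \<in> aog_parses G D. pprob t)"

text \<open>The data sample of an assignment: for each variable x_i one terminal instance of the
 literal it satisfies (x_i or bar x_i), with the variable index as its parameter.\<close>
definition assignment_sample :: "nat \<Rightarrow> bool list \<Rightarrow> ((nat \<times> bool) \<times> nat) set" where
  "assignment_sample d xs = {((i, xs ! i), i) | i. i < d}"

end

theory Submission
  imports Defs
begin

lemma edge_iff: "(c, n) \<in> spn_edges S \<longleftrightarrow> n \<in> spn_nodes S \<and> c \<in> set (node_children (spn_lbl S n))"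
  by (auto simp: spn_edges_def)

lemma leaves_unfold:
  "spn_leaves S n = (case spn_lbl S n of Leaf i b \<Rightarrow> {(i,b)} | _ \<Rightarrow> {}) \<union>
     (if n \<in> spn_nodes S then (\<Union>c\<in>set (node_children (spn_lbl S n)). spn_leaves S c) else {})"
proof (rule set_eqI, safe)
  fix i b assume "(i, b) \<in> spn_leaves S n" "(i, b) \<notin> (if n \<in> spn_nodes S then \<Union>c\<in>set (node_children (spn_lbl S n)). spn_leaves S c else {})"
  then obtain m where m: "(m, n) \<in> (spn_edges S)\<^sup>*" "spn_lbl S m = Leaf i b" and nm: "\<not> (n \<in> spn_nodes S \<and> (\<exists>c\<in>set (node_children (spn_lbl S n)). (i,b) \<in> spn_leaves S c))"
    by (auto simp: spn_leaves_def split: if_splits)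
  from m(1) show "(i, b) \<in> (case spn_lbl S n of Leaf i b \<Rightarrow> {(i,b)} | _ \<Rightarrow> {})"
  proof (cases rule: rtranclE)
    case base then show ?thesis using m by simp
  next
    case (step y)
    then have "(i,b) \<in> spn_leaves S y" using m by (auto simp: spn_leaves_def)
    then show ?thesis using step nm by (auto simp: edge_iff)
  qed
next
  fix i b assume "(i, b) \<in> (case spn_lbl S n of Leaf i b \<Rightarrow> {(i,b)} | _ \<Rightarrow> {})"
  then have "spn_lbl S n = Leaf i b" by (auto split: spn_node.splits)
  then show "(i,b) \<in> spn_leaves S n" by (auto simp: spn_leaves_def)
next
  fix i b assume "(i, b) \<in> (if n \<in> spn_nodes S then \<Union>c\<in>set (node_children (spn_lbl S n)). spn_leaves S c else {})"
  then obtain c m where "n \<in> spn_nodes S" "c \<in> set (node_children (spn_lbl S n))" "(m, c) \<in> (spn_edges S)\<^sup>*" "spn_lbl S m = Leaf i b"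
    by (auto simp: spn_leaves_def split: if_splits)
  then have "(m, n) \<in> (spn_edges S)\<^sup>*" "spn_lbl S m = Leaf i b"
    by (meson edge_iff rtrancl.rtrancl_into_rtrancl)+
  then show "(i,b) \<in> spn_leaves S n" unfolding spn_leaves_def by blast
qed

locale spnc =
  fixes S :: spn and d :: nat
  assumes wfS: "spn_wf S d" and valS: "spn_valid S" and decS: "spn_decomposable S"
begin

abbreviation "N \<equiv> spn_nodes S"
abbreviation "lbl \<equiv> spn_lbl S"
abbreviation "sc \<equiv> spn_scope S"

lemma finN: "finite N" using wfS by (simp add: spn_wf_def)
lemma rootN: "spn_root S \<in> N" using wfS by (simp add: spn_wf_def)
lemma wfE: "wf (spn_edges S)" using wfS by (simp add: spn_wf_def)
lemma root_sc: "sc (spn_root S) = {..<d}" using wfS by (simp add: spn_wf_def)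
lemma ch_nodes: "n \<in> N \<Longrightarrow> c \<in> set (node_children (lbl n)) \<Longrightarrow> c \<in> N"
  using wfS by (auto simp: spn_wf_def)
lemma leaf_lt: "n \<in> N \<Longrightarrow> lbl n = Leaf i b \<Longrightarrow> i < d"
  using wfS unfolding spn_wf_def by fastforce
lemma sum_ne: "n \<in> N \<Longrightarrow> lbl n = spn_node.Sum cs \<Longrightarrow> cs \<noteq> [] \<and> (\<forall>(c, w) \<in> set cs. 0 \<le> w)"
  using wfS unfolding spn_wf_def by fastforce
lemma prod_ne: "n \<in> N \<Longrightarrow> lbl n = spn_node.Prod cs \<Longrightarrow> cs \<noteq> []"
  using wfS unfolding spn_wf_def by fastforce
lemma sum_nodes: "n \<in> N \<Longrightarrow> lbl n = spn_node.Sum cs \<Longrightarrow> c \<in> fst ` set cs \<Longrightarrow> c \<in> N"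
  using ch_nodes[of n c] by auto
lemma prod_nodes: "n \<in> N \<Longrightarrow> lbl n = spn_node.Prod cs \<Longrightarrow> c \<in> set cs \<Longrightarrow> c \<in> N"
  using ch_nodes[of n c] by auto

lemma wf_ind0:
  assumes "n \<in> N" and step: "\<And>n. n \<in> N \<Longrightarrow> (\<And>c. c \<in> set (node_children (lbl n)) \<Longrightarrow> P c) \<Longrightarrow> P n"
  shows "P n"
proof -
  have "n \<in> N \<longrightarrow> P n"
  proof (induction n rule: wf_induct[OF wfE])
    case (1 x)
    show ?case
    proof
      assume x: "x \<in> N"
      show "P x"
        by (rule step[OF x]) (use 1 x ch_nodes in \<open>auto simp: edge_iff\<close>)
    qed
  qed
  then show ?thesis using assms by blast
qed

lemma wf_ind[consumes 1, case_names step]: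
  assumes "n \<in> N" and step: "\<And>n. n \<in> N \<Longrightarrow> (\<And>c. c \<in> set (node_children (lbl n)) \<Longrightarrow> c \<in> N \<Longrightarrow> P c) \<Longrightarrow> P n"
  shows "P n"
proof -
  have "n \<in> N \<longrightarrow> P n"
    by (rule wf_ind0[OF assms(1)]) (use step ch_nodes in blast)
  then show ?thesis using assms(1) by blast
qed

lemma sc_unfold: "sc n = (case lbl n of Leaf i b \<Rightarrow> {i} | _ \<Rightarrow> {}) \<union>
     (if n \<in> N then (\<Union>c\<in>set (node_children (lbl n)). sc c) else {})"
  unfolding spn_scope_def by (subst leaves_unfold) (auto split: spn_node.splits)

lemma sc_leaf: "lbl n = Leaf i b \<Longrightarrow> sc n = {i}"
  by (subst sc_unfold) auto
lemma sc_sum: "n \<in> N \<Longrightarrow> lbl n = spn_node.Sum cs \<Longrightarrow> sc n = (\<Union>c\<in>fst ` set cs. sc c)"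
  by (subst sc_unfold) auto
lemma sc_prod: "n \<in> N \<Longrightarrow> lbl n = spn_node.Prod cs \<Longrightarrow> sc n = (\<Union>c\<in>set cs. sc c)"
  by (subst sc_unfold) auto

lemma sc_ne: "n \<in> N \<Longrightarrow> sc n \<noteq> {}"
proof (induction n rule: wf_ind)
  case (step n)
  show ?case
  proof (cases "lbl n")
    case (Leaf i b) then show ?thesis by (simp add: sc_leaf)
  next
    case (Sum cs)
    then obtain c w where cw: "(c,w) \<in> set cs" using sum_ne[OF step(1)] by (cases cs) auto
    then have c: "c \<in> fst ` set cs" by force
    then have cN: "c \<in> N" using sum_nodes[OF step(1) Sum] by blast
    have "sc c \<noteq> {}" using step(2)[OF _ cN] c Sum by simp
    then show ?thesis using sc_sum[OF step(1) Sum] c by blast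
  next
    case (Prod cs)
    then obtain c where c: "c \<in> set cs" using prod_ne[OF step(1)] by (cases cs) auto
    then have cN: "c \<in> N" using prod_nodes[OF step(1) Prod] by blast
    have "sc c \<noteq> {}" using step(2)[OF _ cN] c Prod by simp
    then show ?thesis using sc_prod[OF step(1) Prod] c by blast
  qed
qed

lemma sc_sub: "m \<in> N \<Longrightarrow> sc m \<subseteq> {..<d}"
proof (induction m rule: wf_ind)
  case (step n)
  show ?case
  proof (cases "lbl n")
    case (Leaf i b) then show ?thesis using leaf_lt[OF step(1)] by (simp add: sc_leaf)
  next
    case (Sum cs)
    have "sc c \<subseteq> {..<d}" if c: "c \<in> fst ` set cs" for c
      using step(2)[OF _ sum_nodes[OF step(1) Sum c]] c Sum by simp
    then show ?thesis using sc_sum[OF step(1) Sum] by blast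
  next
    case (Prod cs)
    have "sc c \<subseteq> {..<d}" if c: "c \<in> set cs" for c
      using step(2)[OF _ prod_nodes[OF step(1) Prod c]] c Prod by simp
    then show ?thesis using sc_prod[OF step(1) Prod] by blast
  qed
qed

lemma sc_fin: "n \<in> N \<Longrightarrow> finite (sc n)"
  using sc_sub finite_subset by blast

lemma sc_sum_child: "n \<in> N \<Longrightarrow> lbl n = spn_node.Sum cs \<Longrightarrow> c \<in> fst ` set cs \<Longrightarrow> sc c = sc n"
proof -
  assume a: "n \<in> N" "lbl n = spn_node.Sum cs" "c \<in> fst ` set cs"
  have eq: "\<forall>c' \<in> fst ` set cs. sc c' = sc c" using valS a unfolding spn_valid_def by blast
  have "sc ` fst ` set cs = {sc c}" using eq a(3) by blast
  then show ?thesis using sc_sum[OF a(1,2)] by simp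
qed

lemma prod_disj: "n \<in> N \<Longrightarrow> lbl n = spn_node.Prod cs \<Longrightarrow> sorted_wrt (\<lambda>a b. sc a \<inter> sc b = {}) cs"
  using decS unfolding spn_decomposable_def sorted_wrt_iff_nth_less by force

lemma disj_distinct: "(\<forall>c\<in>set cs. sc c \<noteq> {}) \<Longrightarrow> sorted_wrt (\<lambda>a b. sc a \<inter> sc b = {}) cs \<Longrightarrow> distinct cs"
  by (induction cs) auto

lemma prod_distinct: "n \<in> N \<Longrightarrow> lbl n = spn_node.Prod cs \<Longrightarrow> distinct cs"
  using disj_distinct prod_disj sc_ne prod_nodes by blast

lemma l2_det: "list_all2 (\<lambda>a v. Q a v \<and> (\<forall>v'. Q a v' \<longrightarrow> v = v')) as vs \<Longrightarrow> list_all2 Q as vs' \<Longrightarrow> vs = vs'"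
  by (induction as vs arbitrary: vs' rule: list_all2_induct) (auto simp: list_all2_Cons1)

lemma val_unique0: "spn_val S xs n v \<Longrightarrow> \<forall>v'. spn_val S xs n v' \<longrightarrow> v = v'"
proof (induction rule: spn_val.induct)
  case (leaf n i b)
  then show ?case by (auto elim: spn_val.cases)
next
  case (sum n cs vs)
  show ?case
  proof (intro allI impI)
    fix v' assume "spn_val S xs n v'"
    then show "(\<Sum>j<length cs. snd (cs ! j) * vs ! j) = v'"
      using sum l2_det[OF sum(2)] by (cases rule: spn_val.cases) auto
  qed
next
  case (prod n cs vs)
  show ?case
  proof (intro allI impI)
    fix v' assume "spn_val S xs n v'"
    then show "prod_list vs = v'"
      using prod l2_det[OF prod(2)] by (cases rule: spn_val.cases) auto
  qed
qed

lemma val_eqI: "spn_val S xs n v \<Longrightarrow> spn_value S xs n = v"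
  unfolding spn_value_def using val_unique0 by blast

lemma val_ex: "n \<in> N \<Longrightarrow> \<exists>v. spn_val S xs n v"
proof (induction n rule: wf_ind)
  case (step n)
  define f where "f c = (SOME v. spn_val S xs c v)" for c
  have F: "spn_val S xs c (f c)" if "c \<in> set (node_children (lbl n))" for c
    using step(2)[OF that ch_nodes[OF step(1) that]] unfolding f_def by (rule someI_ex)
  show ?case
  proof (cases "lbl n")
    case (Leaf i b) then show ?thesis by (auto intro: spn_val.leaf)
  next
    case (Sum cs)
    have "list_all2 (spn_val S xs) (map fst cs) (map f (map fst cs))"
      unfolding list_all2_map2 list_all2_same using F Sum by auto
    then show ?thesis using Sum by (auto intro: spn_val.sum)
  next
    case (Prod cs)
    have "list_all2 (spn_val S xs) cs (map f cs)"
      unfolding list_all2_map2 list_all2_same using F Prod by auto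
    then show ?thesis using Prod by (auto intro: spn_val.prod)
  qed
qed

lemma val_spec: "n \<in> N \<Longrightarrow> spn_val S xs n (spn_value S xs n)"
  using val_ex val_eqI by metis

lemma val_leaf: "lbl n = Leaf i b \<Longrightarrow> spn_value S xs n = (if xs ! i = b then 1 else 0)"
  by (rule val_eqI) (rule spn_val.leaf)

lemma val_sum: "n \<in> N \<Longrightarrow> lbl n = spn_node.Sum cs \<Longrightarrow>
   spn_value S xs n = (\<Sum>j<length cs. snd (cs ! j) * spn_value S xs (fst (cs ! j)))"
proof -
  assume a: "n \<in> N" "lbl n = spn_node.Sum cs"
  have "list_all2 (spn_val S xs) (map fst cs) (map (spn_value S xs) (map fst cs))"
    unfolding list_all2_map2 list_all2_same using a val_spec sum_nodes by auto
  from val_eqI[OF spn_val.sum[OF a(2) this]]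
  have "spn_value S xs n = (\<Sum>j<length cs. snd (cs ! j) * map (spn_value S xs) (map fst cs) ! j)" .
  also have "\<dots> = (\<Sum>j<length cs. snd (cs ! j) * spn_value S xs (fst (cs ! j)))"
    by (rule sum.cong) auto
  finally show ?thesis .
qed

lemma val_prod: "n \<in> N \<Longrightarrow> lbl n = spn_node.Prod cs \<Longrightarrow>
   spn_value S xs n = prod_list (map (spn_value S xs) cs)"
proof -
  assume a: "n \<in> N" "lbl n = spn_node.Prod cs"
  have "list_all2 (spn_val S xs) cs (map (spn_value S xs) cs)"
    unfolding list_all2_map2 list_all2_same using a val_spec prod_nodes by auto
  from spn_val.prod[OF a(2) this] show ?thesis by (intro val_eqI)
qed

lemma sum_w: "n \<in> N \<Longrightarrow> lbl n = spn_node.Sum cs \<Longrightarrow> x \<in> set cs \<Longrightarrow> 0 \<le> snd x"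
  using sum_ne[of n cs] by (auto simp: case_prod_unfold)

lemma val_nonneg: "n \<in> N \<Longrightarrow> 0 \<le> spn_value S xs n"
proof (induction n rule: wf_ind)
  case (step n)
  show ?case
  proof (cases "lbl n")
    case (Leaf i b) then show ?thesis by (simp add: val_leaf)
  next
    case (Sum cs)
    have "0 \<le> snd (cs ! j) * spn_value S xs (fst (cs ! j))" if "j < length cs" for j
    proof -
      have m: "cs ! j \<in> set cs" using that by simp
      then have "0 \<le> snd (cs ! j)" using sum_w[OF step(1) Sum] by blast
      moreover have "0 \<le> spn_value S xs (fst (cs ! j))" using step(2) m Sum ch_nodes[OF step(1)] by force
      ultimately show ?thesis by simp
    qed
    then show ?thesis by (subst val_sum[OF step(1) Sum]) (rule sum_nonneg, simp)
  next
    case (Prod cs)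
    then show ?thesis using val_prod[OF step(1) Prod] step(2) ch_nodes[OF step(1)] by (auto intro!: prod_list_nonneg)
  qed
qed

lemma val_dep0: "n \<in> N \<Longrightarrow> \<forall>ys zs. (\<forall>i\<in>sc n. ys ! i = zs ! i) \<longrightarrow> spn_value S ys n = spn_value S zs n"
proof (induction n rule: wf_ind)
  case (step n)
  have IH: "spn_value S ys c = spn_value S zs c" if "c \<in> set (node_children (lbl n))" "\<forall>i\<in>sc c. ys ! i = zs ! i" for c ys zs
    using step(2)[OF that(1) ch_nodes[OF step(1) that(1)]] that(2) by blast
  show ?case
  proof (intro allI impI)
    fix ys zs :: "bool list" assume h: "\<forall>i\<in>sc n. ys ! i = zs ! i"
    show "spn_value S ys n = spn_value S zs n"
    proof (cases "lbl n")
      case (Leaf i b) then show ?thesis using h by (simp add: val_leaf sc_leaf)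
    next
      case (Sum cs)
      have "spn_value S ys (fst (cs ! j)) = spn_value S zs (fst (cs ! j))" if "j < length cs" for j
      proof -
        have m: "fst (cs ! j) \<in> fst ` set cs" using that by simp
        show ?thesis using IH[of "fst (cs ! j)" ys zs] m Sum h sc_sum[OF step(1) Sum] by auto
      qed
      then show ?thesis using val_sum[OF step(1) Sum, of ys] val_sum[OF step(1) Sum, of zs] by simp
    next
      case (Prod cs)
      have "map (spn_value S ys) cs = map (spn_value S zs) cs"
        using IH Prod h sc_prod[OF step(1) Prod] by (auto intro!: map_cong)
      then show ?thesis using val_prod[OF step(1) Prod] by metis
    qed
  qed
qed

lemma val_dep: "n \<in> N \<Longrightarrow> (\<forall>i\<in>sc n. ys ! i = zs ! i) \<Longrightarrow> spn_value S ys n = spn_value S zs n"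
  using val_dep0 by blast

definition "LL = {ys :: bool list. length ys = d}"

lemma LL_fin: "finite LL" and LL_card: "card LL = 2 ^ d"
proof -
  have e: "LL = {xs. set xs \<subseteq> (UNIV::bool set) \<and> length xs = d}" by (auto simp: LL_def)
  show "finite LL" unfolding e by (rule finite_lists_length_eq) simp
  show "card LL = 2 ^ d" unfolding e by (subst card_lists_length_eq) simp_all
qed

definition "dep f A \<longleftrightarrow> (\<forall>ys zs. length ys = d \<longrightarrow> length zs = d \<longrightarrow> (\<forall>i\<in>A. ys ! i = zs ! i) \<longrightarrow> f ys = f zs)"

lemma depD: "dep f A \<Longrightarrow> length ys = d \<Longrightarrow> length zs = d \<Longrightarrow> (\<And>i. i \<in> A \<Longrightarrow> ys ! i = zs ! i) \<Longrightarrow> f ys = f zs"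
  unfolding dep_def by blast

definition "mix A y z = map (\<lambda>i. if i \<in> A then y ! i else z ! i) [0..<d]"

lemma mix_len[simp]: "length (mix A y z) = d" by (simp add: mix_def)
lemma mix_nth: "i < d \<Longrightarrow> mix A y z ! i = (if i \<in> A then y ! i else z ! i)" by (simp add: mix_def)

lemma fact2:
  fixes f g :: "bool list \<Rightarrow> real"
  assumes AB: "A \<inter> B = {}" "A \<subseteq> {..<d}" "B \<subseteq> {..<d}" and df: "dep f A" and dg: "dep g B"
  shows "2 ^ d * (\<Sum>ys\<in>LL. f ys * g ys) = (\<Sum>ys\<in>LL. f ys) * (\<Sum>ys\<in>LL. g ys)"
proof -
 define phi where "phi (p :: bool list \<times> bool list) = (mix A (fst p) (snd p), mix A (snd p) (fst p))" for p
  have inv: "phi (phi p) = p" if "p \<in> LL \<times> LL" for p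
  proof -
    obtain y z where p0: "p = (y, z)" by (cases p)
    then have p: "p = (y, z)" "length y = d" "length z = d" using that by (auto simp: LL_def)
    have "mix A (mix A y z) (mix A z y) = y"
      by (rule nth_equalityI) (auto simp: mix_nth p)
    moreover have "mix A (mix A z y) (mix A y z) = z"
      by (rule nth_equalityI) (auto simp: mix_nth p)
    ultimately show ?thesis by (simp add: phi_def p)
  qed
  have inS: "phi p \<in> LL \<times> LL" for p by (auto simp: phi_def LL_def)
  have eq: "f (fst (phi p)) * g (fst (phi p)) = f (fst p) * g (snd p)" if "p \<in> LL \<times> LL" for p
  proof -
    obtain y z where p0: "p = (y, z)" by (cases p)
    then have p: "p = (y, z)" "length y = d" "length z = d" using that by (auto simp: LL_def)
    have "f (mix A y z) = f y"
    proof (rule depD[OF df])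
      fix i assume "i \<in> A" then show "mix A y z ! i = y ! i" using AB(2) by (auto simp: mix_nth)
    qed (simp_all add: p)
    moreover have "g (mix A y z) = g z"
    proof (rule depD[OF dg])
      fix i assume i: "i \<in> B"
      then have "i \<notin> A" "i < d" using AB(1,3) by auto
      then show "mix A y z ! i = z ! i" by (simp add: mix_nth)
    qed (simp_all add: p)
    ultimately show ?thesis by (simp add: phi_def p)
  qed
  have "(\<Sum>ys\<in>LL. f ys) * (\<Sum>ys\<in>LL. g ys) = (\<Sum>p\<in>LL \<times> LL. f (fst p) * g (snd p))"
    by (simp add: sum_product sum.cartesian_product case_prod_beta)
  also have "\<dots> = (\<Sum>p\<in>LL \<times> LL. f (fst p) * g (fst p))"
    by (rule sum.reindex_bij_witness[where i=phi and j=phi]) (use inv inS eq in auto)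
  also have "\<dots> = (\<Sum>y\<in>LL. \<Sum>z\<in>LL. f y * g y)"
    unfolding sum.cartesian_product by (simp only: case_prod_unfold)
  also have "\<dots> = 2 ^ d * (\<Sum>ys\<in>LL. f ys * g ys)"
    by (simp add: LL_card sum_distrib_left)
  finally show ?thesis by simp
qed

lemma upd_same: "xs ! i = v \<Longrightarrow> xs[i := v] = xs" by (metis list_update_id)

definition "Zs n = (\<Sum>ys\<in>LL. spn_value S ys n) / 2 ^ (d - card (sc n))"

lemma dep_val: "n \<in> N \<Longrightarrow> dep (\<lambda>ys. spn_value S ys n) (sc n)"
  unfolding dep_def using val_dep by blast

lemma Zs_nonneg: "n \<in> N \<Longrightarrow> 0 \<le> Zs n"
  unfolding Zs_def by (intro divide_nonneg_pos sum_nonneg val_nonneg) auto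

lemma Zs_zero: "n \<in> N \<Longrightarrow> Zs n = 0 \<Longrightarrow> length xs = d \<Longrightarrow> spn_value S xs n = 0"
proof -
  assume a: "n \<in> N" "Zs n = 0" "length xs = d"
  then have "(\<Sum>ys\<in>LL. spn_value S ys n) = 0" unfolding Zs_def by simp
  then have "\<forall>ys\<in>LL. spn_value S ys n = 0"
    using sum_nonneg_eq_0_iff[OF LL_fin, of "\<lambda>ys. spn_value S ys n"] val_nonneg[OF a(1)] by simp
  then show ?thesis using a(3) by (auto simp: LL_def)
qed

lemma Zs_leaf: "n \<in> N \<Longrightarrow> lbl n = Leaf i b \<Longrightarrow> Zs n = 1"
proof -
  assume a: "n \<in> N" "lbl n = Leaf i b"
  have id: "i < d" using leaf_lt[OF a] .
  define T where "T = {ys\<in>LL. ys ! i = b}"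
  define F where "F = {ys\<in>LL. ys ! i \<noteq> b}"
  have fl: "bij_betw (\<lambda>ys. ys[i := \<not> ys ! i]) T F"
    by (rule bij_betwI[where g="\<lambda>ys. ys[i := \<not> ys ! i]"]) (auto simp: T_def F_def LL_def id upd_same)
  have "card T = card F" using bij_betw_same_card[OF fl] .
  moreover have "card T + card F = card LL"
    by (subst card_Un_disjoint[symmetric]) (auto simp: T_def F_def intro: finite_subset[OF _ LL_fin] arg_cong[where f=card])
  ultimately have cT: "2 * card T = 2 ^ d" using LL_card by simp
  have "(\<Sum>ys\<in>LL. spn_value S ys n) = (\<Sum>ys\<in>LL. if ys ! i = b then 1 else 0)"
    by (simp add: val_leaf[OF a(2)])
  also have "\<dots> = real (card T)"
    unfolding T_def by (simp add: sum.If_cases[OF LL_fin] Int_def)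
  finally have s: "(\<Sum>ys\<in>LL. spn_value S ys n) = real (card T)" .
  have "real (2 ^ d) = 2 * 2 ^ (d - 1)" using id
    by (metis One_nat_def Suc_pred gr_implies_not0 neq0_conv of_nat_numeral of_nat_power power_Suc)
  then have "real (card T) = 2 ^ (d - 1)" using cT
    by (metis (mono_tags, lifting) mult_cancel_left of_nat_mult of_nat_numeral zero_neq_numeral)
  then show ?thesis unfolding Zs_def s using sc_leaf[OF a(2)] by simp
qed

lemma Zs_sum: "n \<in> N \<Longrightarrow> lbl n = spn_node.Sum cs \<Longrightarrow>
   Zs n = (\<Sum>j<length cs. snd (cs ! j) * Zs (fst (cs ! j)))"
proof -
  assume a: "n \<in> N" "lbl n = spn_node.Sum cs"
  have scj: "sc (fst (cs ! j)) = sc n" if "j < length cs" for j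
    using sc_sum_child[OF a] that by simp
  have "Zs n = (\<Sum>ys\<in>LL. \<Sum>j<length cs. snd (cs ! j) * spn_value S ys (fst (cs ! j))) / 2 ^ (d - card (sc n))"
    unfolding Zs_def using val_sum[OF a] by simp
  also have "\<dots> = (\<Sum>j<length cs. snd (cs ! j) * ((\<Sum>ys\<in>LL. spn_value S ys (fst (cs ! j))) / 2 ^ (d - card (sc n))))"
    by (subst sum.swap) (simp add: sum_divide_distrib sum_distrib_left)
  also have "\<dots> = (\<Sum>j<length cs. snd (cs ! j) * Zs (fst (cs ! j)))"
    by (rule sum.cong) (simp_all add: Zs_def scj)
  finally show ?thesis .
qed

lemma pow_split: "a + b \<le> d \<Longrightarrow> (2::real) ^ (d - a) * 2 ^ (d - b) = 2 ^ d * 2 ^ (d - (a + b))"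
proof -
  assume "a + b \<le> d"
  then have "(d - a) + (d - b) = d + (d - (a + b))" by simp
  then show ?thesis by (metis power_add)
qed

lemma Zs_list: "set cs \<subseteq> N \<Longrightarrow> sorted_wrt (\<lambda>a b. sc a \<inter> sc b = {}) cs \<Longrightarrow>
  (\<Sum>ys\<in>LL. prod_list (map (\<lambda>c. spn_value S ys c) cs)) / 2 ^ (d - card (\<Union>c\<in>set cs. sc c))
   = prod_list (map Zs cs)"
proof (induction cs)
  case Nil
  then show ?case by (simp add: LL_card)
next
  case (Cons c cs)
  define U where "U = (\<Union>c\<in>set cs. sc c)"
  have cN: "c \<in> N" and csN: "set cs \<subseteq> N" using Cons by auto
  have disj: "sc c \<inter> U = {}" using Cons(3) by (auto simp: U_def)
  have Usub: "U \<subseteq> {..<d}" using csN sc_sub by (auto simp: U_def)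
  have Ufin: "finite U" using csN sc_fin by (auto simp: U_def)
  have dg: "dep (\<lambda>ys. prod_list (map (\<lambda>c. spn_value S ys c) cs)) U"
    unfolding dep_def
  proof (intro allI impI)
    fix ys zs :: "bool list" assume "\<forall>i\<in>U. ys ! i = zs ! i"
    then show "prod_list (map (\<lambda>c. spn_value S ys c) cs) = prod_list (map (\<lambda>c. spn_value S zs c) cs)"
      using csN val_dep by (intro arg_cong[where f=prod_list] map_cong) (auto simp: U_def)
  qed
  note f2 = fact2[OF disj sc_sub[OF cN] Usub dep_val[OF cN] dg]
  have card: "card (sc c \<union> U) = card (sc c) + card U"
    using disj sc_fin[OF cN] Ufin by (simp add: card_Un_disjoint)
  have cle: "card (sc c) + card U \<le> d"
  proof -
    have "card (sc c \<union> U) \<le> card {..<d}" using sc_sub[OF cN] Usub by (intro card_mono) auto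
    then show ?thesis using card by simp
  qed
  have IH: "(\<Sum>ys\<in>LL. prod_list (map (\<lambda>c. spn_value S ys c) cs)) / 2 ^ (d - card U) = prod_list (map Zs cs)"
    using Cons(1) csN Cons(3) by (simp add: U_def)
  have "(\<Sum>ys\<in>LL. prod_list (map (\<lambda>c. spn_value S ys c) (c # cs))) / 2 ^ (d - card (\<Union>c\<in>set (c # cs). sc c))
      = (\<Sum>ys\<in>LL. spn_value S ys c * prod_list (map (\<lambda>c. spn_value S ys c) cs)) / 2 ^ (d - (card (sc c) + card U))"
    using card by (simp add: U_def)
  also have "\<dots> = ((\<Sum>ys\<in>LL. spn_value S ys c) / 2 ^ (d - card (sc c))) *
      ((\<Sum>ys\<in>LL. prod_list (map (\<lambda>c. spn_value S ys c) cs)) / 2 ^ (d - card U))"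
  proof -
    have p: "(2::real) ^ (d - card (sc c)) * 2 ^ (d - card U) = 2 ^ d * 2 ^ (d - (card (sc c) + card U))"
      by (rule pow_split[OF cle])
    show ?thesis using f2 p by (simp add: field_simps)
  qed
  also have "\<dots> = prod_list (map Zs (c # cs))" using IH by (simp add: Zs_def)
  finally show ?case .
qed

lemma Zs_prod: "n \<in> N \<Longrightarrow> lbl n = spn_node.Prod cs \<Longrightarrow> Zs n = prod_list (map Zs cs)"
proof -
  assume a: "n \<in> N" "lbl n = spn_node.Prod cs"
  have "Zs n = (\<Sum>ys\<in>LL. prod_list (map (\<lambda>c. spn_value S ys c) cs)) / 2 ^ (d - card (\<Union>c\<in>set cs. sc c))"
    unfolding Zs_def using val_prod[OF a] sc_prod[OF a] by simp
  also have "\<dots> = prod_list (map Zs cs)"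
    by (rule Zs_list) (use prod_nodes[OF a] prod_disj[OF a] in auto)
  finally show ?thesis .
qed

lemma Zs_root: "Zs (spn_root S) = (\<Sum>ys | length ys = d. spn_value S ys (spn_root S))"
  unfolding Zs_def root_sc LL_def by simp

definition "ands = {n \<in> N. \<exists>cs. lbl n = spn_node.Prod cs \<and> 2 \<le> length cs}"
definition "ors = N - ands"
definition "pr n c = (case lbl n of spn_node.Sum cs \<Rightarrow>
   (if Zs n = 0 then (if c = fst (hd cs) then 1 else 0)
    else (\<Sum>j | j < length cs \<and> fst (cs ! j) = c. snd (cs ! j) * Zs c) / Zs n) | _ \<Rightarrow> 0)"
definition "R n = (case lbl n of Leaf i b \<Rightarrow> {(n, Tm (i, b), 1::real)}
   | spn_node.Sum cs \<Rightarrow> (\<lambda>c. (n, Nt c, pr n c)) ` fst ` set cs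
   | spn_node.Prod cs \<Rightarrow> (if length cs = 1 then {(n, Nt (hd cs), 1)} else {}))"
definition "terms = {l. \<exists>n\<in>N. lbl n = Leaf (fst l) (snd l)}"
definition GG :: "nat aog" where "GG = \<lparr>aog_terms = terms, aog_ands = ands, aog_ors = ors,
   aog_start = spn_root S,
   aog_and_rule = (\<lambda>n. (map Nt (node_children (lbl n)), \<lambda>_. True, \<lambda>_. 0)),
   aog_or_rules = (\<Union>n\<in>N. R n)\<rparr>"

lemma GG_simps[simp]: "aog_terms GG = terms" "aog_ands GG = ands" "aog_ors GG = ors"
  "aog_start GG = spn_root S" "aog_and_rule GG n = (map Nt (node_children (lbl n)), \<lambda>_. True, \<lambda>_. 0)"
  "aog_or_rules GG = (\<Union>n\<in>N. R n)"
  by (simp_all add: GG_def)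

lemma R_fst: "r \<in> R n \<Longrightarrow> fst r = n"
  by (auto simp: R_def split: spn_node.splits if_splits)

lemma rules_iff: "(B, x, p) \<in> aog_or_rules GG \<longleftrightarrow> B \<in> N \<and> (B, x, p) \<in> R B"
  using R_fst by fastforce

lemma rules_iff2: "(B, x, p) \<in> (\<Union>n\<in>N. R n) \<longleftrightarrow> B \<in> N \<and> (B, x, p) \<in> R B"
  using rules_iff by simp

lemma ands_ors: "ands \<union> ors = N" "ands \<inter> ors = {}" "ands \<subseteq> N" "ors \<subseteq> N"
  by (auto simp: ands_def ors_def)

lemma symbols_GG: "aog_symbols GG = Tm ` terms \<union> Nt ` N"
  using ands_ors by (simp add: aog_symbols_def)

lemma R_fin: "finite (R n)"
  by (auto simp: R_def split: spn_node.splits)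

lemma R_card: "card (R n) \<le> 1 + length (node_children (lbl n))"
proof (cases "lbl n")
  case (Sum cs)
  have "card (R n) \<le> card (fst ` set cs)" using Sum by (simp add: R_def card_image_le)
  also have "\<dots> = card (set (map fst cs))" by simp
  also have "\<dots> \<le> length (map fst cs)" by (rule card_length)
  finally show ?thesis using Sum by simp
qed (auto simp: R_def)

lemma terms_sub: "terms \<subseteq> (\<lambda>n. case lbl n of Leaf i b \<Rightarrow> (i, b) | _ \<Rightarrow> (0, True)) ` N"
proof
  fix l assume "l \<in> terms"
  then obtain n where "n \<in> N" "lbl n = Leaf (fst l) (snd l)" by (auto simp: terms_def)
  then show "l \<in> (\<lambda>n. case lbl n of Leaf i b \<Rightarrow> (i, b) | _ \<Rightarrow> (0, True)) ` N"
    by (intro image_eqI[where x=n]) auto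
qed

lemma terms_fin: "finite terms" using finite_surj[OF finN terms_sub] .

lemma terms_card: "card terms \<le> card N"
proof -
  have "card terms \<le> card ((\<lambda>n. case lbl n of Leaf i b \<Rightarrow> (i, b) | _ \<Rightarrow> (0, True)) ` N)"
    by (rule card_mono[OF finite_imageI[OF finN] terms_sub])
  also have "\<dots> \<le> card N" by (rule card_image_le[OF finN])
  finally show ?thesis .
qed

lemma size_GG: "real (aog_size GG) \<le> 4 * real (spn_size S)"
proof -
  let ?L = "\<Sum>n\<in>N. length (node_children (lbl n))"
  have a: "card ands + card ors = card N"
    using ands_ors card_Un_disjoint[of ands ors] finite_subset[OF _ finN] by metis
  have b: "(\<Sum>A\<in>ands. length (fst (aog_and_rule GG A))) \<le> ?L"
    by simp (rule sum_mono2[OF finN ands_ors(3)], auto)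
  have "card (aog_or_rules GG) \<le> (\<Sum>n\<in>N. card (R n))"
    by simp (rule card_UN_le[OF finN])
  also have "\<dots> \<le> (\<Sum>n\<in>N. 1 + length (node_children (lbl n)))"
    by (rule sum_mono) (rule R_card)
  also have "\<dots> = card N + ?L" by (simp add: sum_Suc)
  finally have c: "card (aog_or_rules GG) \<le> card N + ?L" .
  have "aog_size GG \<le> 4 * spn_size S"
    using a b c terms_card unfolding aog_size_def spn_size_def by simp
  then show ?thesis by (metis of_nat_le_iff of_nat_mult of_nat_numeral)
qed

lemma pr_nonneg: "n \<in> N \<Longrightarrow> 0 \<le> pr n c"
proof (cases "lbl n")
  case (Sum cs)
  assume n: "n \<in> N"
  have "0 \<le> (\<Sum>j | j < length cs \<and> fst (cs ! j) = c. snd (cs ! j) * Zs c)"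
  proof (rule sum_nonneg)
    fix j assume "j \<in> {j. j < length cs \<and> fst (cs ! j) = c}"
    then have j: "j < length cs" "fst (cs ! j) = c" by auto
    then have "cs ! j \<in> set cs" by simp
    then have "0 \<le> snd (cs ! j)" using sum_w[OF n Sum] by blast
    moreover have "c \<in> N" using sum_nodes[OF n Sum] j by force
    ultimately show "0 \<le> snd (cs ! j) * Zs c" using Zs_nonneg by simp
  qed
  then show ?thesis using Sum Zs_nonneg[OF n] by (simp add: pr_def)
qed (simp_all add: pr_def)

lemma pr_sum: "n \<in> N \<Longrightarrow> lbl n = spn_node.Sum cs \<Longrightarrow> (\<Sum>c\<in>fst ` set cs. pr n c) = 1"
proof -
  assume n: "n \<in> N" and l: "lbl n = spn_node.Sum cs"
  have ne: "cs \<noteq> []" using sum_ne[OF n l] by simp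
  have h: "fst (hd cs) \<in> fst ` set cs" using ne by simp
  show ?thesis
  proof (cases "Zs n = 0")
    case True
    then have "(\<Sum>c\<in>fst ` set cs. pr n c) = (\<Sum>c\<in>fst ` set cs. if c = fst (hd cs) then 1 else 0)"
      by (simp add: pr_def l)
    also have "\<dots> = 1" using h by (simp add: sum.delta)
    finally show ?thesis .
  next
    case False
    have pc: "pr n c = (\<Sum>j | j \<in> {..<length cs} \<and> fst (cs ! j) = c. snd (cs ! j) * Zs (fst (cs ! j))) / Zs n" for c
    proof -
      have "(\<Sum>j | j < length cs \<and> fst (cs ! j) = c. snd (cs ! j) * Zs c) =
            (\<Sum>j | j \<in> {..<length cs} \<and> fst (cs ! j) = c. snd (cs ! j) * Zs (fst (cs ! j)))"
        by (rule sum.cong) auto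
      then show ?thesis by (simp add: pr_def l False)
    qed
    have "(\<Sum>c\<in>fst ` set cs. pr n c) =
      (\<Sum>c\<in>fst ` set cs. (\<Sum>j | j \<in> {..<length cs} \<and> fst (cs ! j) = c. snd (cs ! j) * Zs (fst (cs ! j)))) / Zs n"
      unfolding pc by (simp add: sum_divide_distrib)
    also have "\<dots> = (\<Sum>j<length cs. snd (cs ! j) * Zs (fst (cs ! j))) / Zs n"
      by (subst sum.group) (auto intro!: imageI nth_mem)
    also have "\<dots> = 1" using Zs_sum[OF n l] False by simp
    finally show ?thesis .
  qed
qed

lemma wf_GG: "aog_wf GG"
proof -
  have A: "\<forall>A \<in> ands. 2 \<le> length (fst (aog_and_rule GG A)) \<and>
        distinct (fst (aog_and_rule GG A)) \<and> set (fst (aog_and_rule GG A)) \<subseteq> aog_symbols GG"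
  proof
    fix A assume "A \<in> ands"
    then obtain cs where A: "A \<in> N" "lbl A = spn_node.Prod cs" "2 \<le> length cs" by (auto simp: ands_def)
    show "2 \<le> length (fst (aog_and_rule GG A)) \<and>
        distinct (fst (aog_and_rule GG A)) \<and> set (fst (aog_and_rule GG A)) \<subseteq> aog_symbols GG"
      using A prod_distinct[OF A(1,2)] prod_nodes[OF A(1,2)]
      by (auto simp: symbols_GG distinct_map inj_on_def)
  qed
  have B: "\<forall>(B, x, p) \<in> aog_or_rules GG. B \<in> ors \<and> x \<in> aog_symbols GG \<and> 0 \<le> p"
  proof (clarify)
    fix B x p assume "(B, x, p) \<in> aog_or_rules GG"
    then have B: "B \<in> N" "(B, x, p) \<in> R B" by (meson rules_iff)+
    show "B \<in> ors \<and> x \<in> aog_symbols GG \<and> 0 \<le> p"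
    proof (cases "lbl B")
      case (Leaf i b)
      have "(i, b) \<in> terms" using B(1) Leaf by (force simp: terms_def)
      then show ?thesis using B Leaf by (auto simp: R_def ors_def ands_def symbols_GG)
    next
      case (Sum cs)
      then show ?thesis using B pr_nonneg[OF B(1)] sum_nodes[OF B(1) Sum]
        by (auto simp: R_def ors_def ands_def symbols_GG)
    next
      case (Prod cs)
      then show ?thesis using B prod_nodes[OF B(1) Prod, of "hd cs"]
        by (cases cs) (auto simp: R_def ors_def ands_def symbols_GG split: if_splits)
    qed
  qed
  have C: "\<forall>B \<in> ors. (\<Sum>r \<in> {r \<in> aog_or_rules GG. fst r = B}. snd (snd r)) = 1"
  proof
    fix B assume Bo: "B \<in> ors"
    then have BN: "B \<in> N" by (auto simp: ors_def)
    have e: "{r \<in> aog_or_rules GG. fst r = B} = R B" using BN R_fst by fastforce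
    show "(\<Sum>r \<in> {r \<in> aog_or_rules GG. fst r = B}. snd (snd r)) = 1"
      unfolding e
    proof (cases "lbl B")
      case (Leaf i b) then show "(\<Sum>r \<in> R B. snd (snd r)) = 1" by (simp add: R_def)
    next
      case (Sum cs)
      have "(\<Sum>r \<in> R B. snd (snd r)) = (\<Sum>c\<in>fst ` set cs. pr B c)"
        using Sum by (simp add: R_def sum.reindex inj_on_def)
      then show "(\<Sum>r \<in> R B. snd (snd r)) = 1" using pr_sum[OF BN Sum] by simp
    next
      case (Prod cs)
      have "cs \<noteq> []" using prod_ne[OF BN Prod] .
      then have "0 < length cs" by simp
      moreover have "\<not> 2 \<le> length cs" using Bo Prod BN by (auto simp: ors_def ands_def)
      ultimately have "length cs = 1" by linarith
      then show "(\<Sum>r \<in> R B. snd (snd r)) = 1" using Prod by (simp add: R_def)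
    qed
  qed
  show ?thesis unfolding aog_wf_def
    using A B C terms_fin finN ands_ors rootN R_fin
    by (auto intro: finite_subset)
qed

definition "DA xs A = {((i, xs ! i), i) | i. i \<in> A}"

definition "PS xs n = {t. pvalid GG t \<and> psym t = Nt n \<and> distinct (pleaves t) \<and> set (pleaves t) = DA xs (sc n)}"

lemma DA_mem: "e \<in> DA xs A \<longleftrightarrow> fst (fst e) \<in> A \<and> e = ((fst (fst e), xs ! fst (fst e)), fst (fst e))"
  by (cases e) (auto simp: DA_def)

lemma DA_restrict: "X \<subseteq> DA xs A \<Longrightarrow> fst ` fst ` X \<subseteq> B \<Longrightarrow> X \<subseteq> DA xs B"
  unfolding DA_mem subset_iff by (metis image_eqI)

lemma DA_vars: "fst ` fst ` DA xs A = A"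
  by (force simp: DA_def image_iff)

lemma DA_Un: "DA xs (A \<union> B) = DA xs A \<union> DA xs B" by (auto simp: DA_def)
lemma DA_Int: "A \<inter> B = {} \<Longrightarrow> DA xs A \<inter> DA xs B = {}" by (auto simp: DA_def)

lemma psym_Tm: "psym t = Tm l \<Longrightarrow> \<exists>th. t = PT l th"
  by (cases t) auto

lemma not_and_ors: "n \<in> ors \<Longrightarrow> n \<notin> ands" by (auto simp: ors_def)

lemma vars_sub: "pvalid GG t \<Longrightarrow> psym t = Nt n \<Longrightarrow> fst ` fst ` set (pleaves t) \<subseteq> sc n"
proof (induction t arbitrary: n)
  case (PT l th) then show ?case by simp
next
  case (PAnd A th ts)
  then have A: "A = n" "A \<in> ands" "map psym ts = map Nt (node_children (lbl A))" "list_all (pvalid GG) ts"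
    by auto
  then obtain cs where cs: "A \<in> N" "lbl A = spn_node.Prod cs" by (auto simp: ands_def)
  have "fst ` fst ` set (pleaves t') \<subseteq> sc n" if t': "t' \<in> set ts" for t'
  proof -
    have "psym t' \<in> set (map psym ts)" using t' by simp
    then obtain c where c: "c \<in> set cs" "psym t' = Nt c" using A(3) cs by auto
    have "fst ` fst ` set (pleaves t') \<subseteq> sc c"
      using PAnd(1)[OF t' _ c(2)] A(4) t' by (simp add: list_all_iff)
    also have "\<dots> \<subseteq> sc n" using sc_prod[OF cs] c A(1) by auto
    finally show ?thesis .
  qed
  then show ?case by auto
next
  case (POr B th x p t)
  then have B0: "B = n" "(B, x, p) \<in> aog_or_rules GG" "psym t = x" "pvalid GG t"
    by (simp_all del: GG_simps)
  then have B: "B = n" "B \<in> N" "(B, x, p) \<in> R B" "psym t = x" "pvalid GG t"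
    by (meson rules_iff)+
  show ?case
  proof (cases "lbl B")
    case (Leaf i b)
    then have "x = Tm (i, b)" using B by (simp add: R_def)
    then obtain th' where "t = PT (i, b) th'" using B psym_Tm by blast
    then show ?thesis using B Leaf sc_leaf by simp
  next
    case (Sum cs)
    then obtain c where c: "c \<in> fst ` set cs" "x = Nt c" using B by (auto simp: R_def)
    show ?thesis using POr(1)[OF B(5)] B c sc_sum_child[OF B(2) Sum c(1)] by simp
  next
    case (Prod cs)
    then have c: "x = Nt (hd cs)" "cs \<noteq> []" using B by (auto simp: R_def split: if_splits)
    then have "hd cs \<in> set cs" by simp
    then have sub: "sc (hd cs) \<subseteq> sc n" using sc_prod[OF B(2) Prod] B(1) by blast
    have h: "fst ` fst ` set (pleaves t) \<subseteq> sc (hd cs)" using POr(1)[OF B(5)] B(4) c(1) by simp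
    have "fst ` fst ` set (pleaves t) \<subseteq> sc n" using h sub by (rule order_trans)
    then show ?thesis by simp
  qed
qed

lemma concat_iff:
  assumes "sorted_wrt (\<lambda>a b. sc a \<inter> sc b = {}) cs"
    and "list_all2 (\<lambda>c t. fst ` fst ` set (pleaves t) \<subseteq> sc c) cs ts"
  shows "(distinct (concat (map pleaves ts)) \<and> set (concat (map pleaves ts)) = DA xs (\<Union>c\<in>set cs. sc c))
    \<longleftrightarrow> list_all2 (\<lambda>c t. distinct (pleaves t) \<and> set (pleaves t) = DA xs (sc c)) cs ts"
  using assms(2,1)
proof (induction cs ts rule: list_all2_induct)
  case Nil
  then show ?case by (simp add: DA_def)
next
  case (Cons c cs t ts)
  define U where "U = (\<Union>c\<in>set cs. sc c)"
  define X where "X = set (pleaves t)"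
  define Y where "Y = set (concat (map pleaves ts))"
  have disj: "sc c \<inter> U = {}" using Cons(4) by (auto simp: U_def)
  have vX: "fst ` fst ` X \<subseteq> sc c" using Cons(1) by (simp add: X_def)
  have vY: "fst ` fst ` Y \<subseteq> U"
  proof -
    have "\<forall>t'\<in>set ts. \<exists>c'\<in>set cs. fst ` fst ` set (pleaves t') \<subseteq> sc c'"
      using Cons(2) by (induction cs ts rule: list_all2_induct) auto
    then show ?thesis by (force simp: Y_def U_def)
  qed
  have IH: "(distinct (concat (map pleaves ts)) \<and> Y = DA xs U) \<longleftrightarrow>
      list_all2 (\<lambda>c t. distinct (pleaves t) \<and> set (pleaves t) = DA xs (sc c)) cs ts"
    using Cons(3) Cons(4) by (simp add: Y_def U_def)
  have sc_eq: "(\<Union>c\<in>set (c # cs). sc c) = sc c \<union> U" by (simp add: U_def)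
  show ?case
  proof
    assume a: "distinct (concat (map pleaves (t # ts))) \<and> set (concat (map pleaves (t # ts))) = DA xs (\<Union>c\<in>set (c # cs). sc c)"
    then have d: "distinct (pleaves t)" "distinct (concat (map pleaves ts))" "X \<inter> Y = {}"
      and u: "X \<union> Y = DA xs (sc c) \<union> DA xs U"
      by (auto simp: X_def Y_def sc_eq DA_Un U_def)
    have XY: "X \<subseteq> DA xs (sc c \<union> U)" "Y \<subseteq> DA xs (sc c \<union> U)" using u by (auto simp: DA_Un)
    have X1: "X \<subseteq> DA xs (sc c)" by (rule DA_restrict[OF XY(1) vX])
    have Y1: "Y \<subseteq> DA xs U" by (rule DA_restrict[OF XY(2) vY])
    have X2: "DA xs (sc c) \<subseteq> X"
    proof
      fix e assume e: "e \<in> DA xs (sc c)"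
      have "e \<notin> Y" using e vY disj DA_mem by blast
      then show "e \<in> X" using e u by blast
    qed
    have Y2: "DA xs U \<subseteq> Y"
    proof
      fix e assume e: "e \<in> DA xs U"
      have "e \<notin> X" using e vX disj DA_mem by blast
      then show "e \<in> Y" using e u by blast
    qed
    show "list_all2 (\<lambda>c t. distinct (pleaves t) \<and> set (pleaves t) = DA xs (sc c)) (c # cs) (t # ts)"
      using IH d X1 X2 Y1 Y2 by (auto simp: X_def)
  next
    assume "list_all2 (\<lambda>c t. distinct (pleaves t) \<and> set (pleaves t) = DA xs (sc c)) (c # cs) (t # ts)"
    then have a: "distinct (pleaves t)" "X = DA xs (sc c)" "distinct (concat (map pleaves ts))" "Y = DA xs U"
      using IH by (auto simp: X_def)
    have "X \<inter> Y = {}" using a DA_Int[OF disj] by simp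
    then show "distinct (concat (map pleaves (t # ts))) \<and> set (concat (map pleaves (t # ts))) = DA xs (\<Union>c\<in>set (c # cs). sc c)"
      using a by (auto simp: X_def Y_def sc_eq DA_Un U_def)
  qed
qed

lemma sum_lists:
  fixes h :: "'a \<Rightarrow> real"
  shows "(\<forall>c\<in>set cs. finite (P c)) \<Longrightarrow> finite {ts. list_all2 (\<lambda>c t. t \<in> P c) cs ts} \<and>
    (\<Sum>ts\<in>{ts. list_all2 (\<lambda>c t. t \<in> P c) cs ts}. prod_list (map h ts)) = prod_list (map (\<lambda>c. \<Sum>t\<in>P c. h t) cs)"
proof (induction cs)
  case Nil
  then show ?case by simp
next
  case (Cons c cs)
  let ?X = "{ts. list_all2 (\<lambda>c t. t \<in> P c) cs ts}"
  have e: "{ts. list_all2 (\<lambda>c t. t \<in> P c) (c # cs) ts} = (\<lambda>(t, ts). t # ts) ` (P c \<times> ?X)"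
    by (auto simp: list_all2_Cons1)
  have fin: "finite (P c)" "finite ?X" using Cons by auto
  have inj: "inj_on (\<lambda>(t, ts). t # ts) (P c \<times> ?X)" by (auto simp: inj_on_def)
  have "(\<Sum>ts\<in>(\<lambda>(t, ts). t # ts) ` (P c \<times> ?X). prod_list (map h ts)) = (\<Sum>(t, ts)\<in>P c \<times> ?X. h t * prod_list (map h ts))"
    by (subst sum.reindex[OF inj]) (simp add: case_prod_beta)
  also have "\<dots> = (\<Sum>t\<in>P c. h t) * (\<Sum>ts\<in>?X. prod_list (map h ts))"
    by (simp add: sum_product sum.cartesian_product)
  finally show ?case using e fin Cons by simp
qed

lemma l2_nth: "list_all2 P cs ts \<longleftrightarrow> length ts = length cs \<and> (\<forall>k<length cs. P (cs ! k) (ts ! k))"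
  by (auto simp: list_all2_conv_all_nth)

lemma prod_list_mult: "prod_list (map f xs) * prod_list (map g xs) = prod_list (map (\<lambda>x. f x * g x :: real) xs)"
  by (induction xs) (simp_all add: algebra_simps)

lemma nors_leaf: "n \<in> N \<Longrightarrow> lbl n = Leaf i b \<Longrightarrow> n \<in> ors"
  by (auto simp: ors_def ands_def)
lemma nors_sum: "n \<in> N \<Longrightarrow> lbl n = spn_node.Sum cs \<Longrightarrow> n \<in> ors"
  by (auto simp: ors_def ands_def)
lemma nors_prod: "n \<in> N \<Longrightarrow> lbl n = spn_node.Prod cs \<Longrightarrow> length cs = 1 \<Longrightarrow> n \<in> ors"
  by (auto simp: ors_def ands_def)

lemma pvalid_POr: "pvalid GG (POr B th x p t) \<longleftrightarrow> B \<in> ors \<and> B \<in> N \<and> (B, x, p) \<in> R B \<and> psym t = x \<and> th = ptheta t \<and> pvalid GG t"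
  using rules_iff[of B x p] by (simp del: GG_simps) (auto simp: ors_def)

lemma pvalid_PAnd: "pvalid GG (PAnd A th ts) \<longleftrightarrow> A \<in> ands \<and> map psym ts = map Nt (node_children (lbl A)) \<and> th = 0 \<and> list_all (pvalid GG) ts"
  by simp

lemma PS_leaf:
  assumes n: "n \<in> N" and l: "lbl n = Leaf i b"
  shows "PS xs n = (if xs ! i = b then {POr n i (Tm (i, b)) 1 (PT (i, b) i)} else {})"
proof -
  have nors: "n \<in> ors" using nors_leaf[OF n l] .
  have Rn: "R n = {(n, Tm (i, b), 1)}" using l by (simp add: R_def)
  have tm: "(i, b) \<in> terms" using n l by (force simp: terms_def)
  have DAi: "DA xs (sc n) = {((i, xs ! i), i)}" using sc_leaf[OF l] by (auto simp: DA_def)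
  show ?thesis
  proof (rule set_eqI, rule iffI)
    fix t assume t: "t \<in> PS xs n"
    then have v: "pvalid GG t" "psym t = Nt n" "distinct (pleaves t)" "set (pleaves t) = {((i, xs ! i), i)}"
      by (auto simp: PS_def DAi)
    show "t \<in> (if xs ! i = b then {POr n i (Tm (i, b)) 1 (PT (i, b) i)} else {})"
    proof (cases t)
      case (PT l th) then show ?thesis using v by simp
    next
      case (PAnd A th ts) then show ?thesis using v not_and_ors[OF nors] by simp
    next
      case (POr B th x p t')
      then have h: "B = n" "(n, x, p) \<in> R n" "psym t' = x" "th = ptheta t'"
        using v pvalid_POr by auto
      then have xp: "x = Tm (i, b)" "p = 1" using Rn by auto
      then obtain th' where t': "t' = PT (i, b) th'" using h psym_Tm by blast
      have "((i, b), th') = ((i, xs ! i), i)" using v(4) POr t' by simp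
      then show ?thesis using POr h xp t' by auto
    qed
  next
    fix t assume "t \<in> (if xs ! i = b then {POr n i (Tm (i, b)) 1 (PT (i, b) i)} else {})"
    then have t: "xs ! i = b" "t = POr n i (Tm (i, b)) 1 (PT (i, b) i)" by (auto split: if_splits)
    have "pvalid GG t" unfolding t(2) pvalid_POr using nors n Rn tm by simp
    then show "t \<in> PS xs n" using t by (simp add: PS_def DAi)
  qed
qed

lemma PS_sum:
  assumes n: "n \<in> N" and l: "lbl n = spn_node.Sum cs"
  shows "PS xs n = (\<lambda>(c, t). POr n (ptheta t) (Nt c) (pr n c) t) ` (SIGMA c:fst ` set cs. PS xs c)"
proof -
  have nors: "n \<in> ors" using nors_sum[OF n l] .
  have Rn: "R n = (\<lambda>c. (n, Nt c, pr n c)) ` fst ` set cs" using l by (simp add: R_def)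
  show ?thesis
  proof (rule set_eqI, rule iffI)
    fix t assume t: "t \<in> PS xs n"
    then have v: "pvalid GG t" "psym t = Nt n" "distinct (pleaves t)" "set (pleaves t) = DA xs (sc n)"
      by (auto simp: PS_def)
    show "t \<in> (\<lambda>(c, t). POr n (ptheta t) (Nt c) (pr n c) t) ` (SIGMA c:fst ` set cs. PS xs c)"
    proof (cases t)
      case (PT l th) then show ?thesis using v by simp
    next
      case (PAnd A th ts) then show ?thesis using v not_and_ors[OF nors] by simp
    next
      case (POr B th x p t')
      then have h: "B = n" "(n, x, p) \<in> R n" "psym t' = x" "th = ptheta t'" "pvalid GG t'"
        using v pvalid_POr by auto
      then obtain c where c: "c \<in> fst ` set cs" "x = Nt c" "p = pr n c" using Rn by auto
      have "t' \<in> PS xs c" using h c v POr sc_sum_child[OF n l c(1)] by (simp add: PS_def)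
      then show ?thesis using POr h c by (intro image_eqI[where x="(c, t')"]) auto
    qed
  next
    fix t assume "t \<in> (\<lambda>(c, t). POr n (ptheta t) (Nt c) (pr n c) t) ` (SIGMA c:fst ` set cs. PS xs c)"
    then obtain c t' where c: "c \<in> fst ` set cs" "t' \<in> PS xs c" and t: "t = POr n (ptheta t') (Nt c) (pr n c) t'"
      by auto
    have "pvalid GG t" unfolding t pvalid_POr using nors n Rn c by (auto simp: PS_def)
    then show "t \<in> PS xs n" using t c sc_sum_child[OF n l c(1)] by (simp add: PS_def)
  qed
qed

lemma PS_prod1:
  assumes n: "n \<in> N" and l: "lbl n = spn_node.Prod [c]"
  shows "PS xs n = (\<lambda>t. POr n (ptheta t) (Nt c) 1 t) ` PS xs c"
proof -
  have nors: "n \<in> ors" using nors_prod[OF n l] by simp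
  have Rn: "R n = {(n, Nt c, 1)}" using l by (simp add: R_def)
  have scn: "sc n = sc c" using sc_prod[OF n l] by simp
  show ?thesis
  proof (rule set_eqI, rule iffI)
    fix t assume t: "t \<in> PS xs n"
    then have v: "pvalid GG t" "psym t = Nt n" "distinct (pleaves t)" "set (pleaves t) = DA xs (sc n)"
      by (auto simp: PS_def)
    show "t \<in> (\<lambda>t. POr n (ptheta t) (Nt c) 1 t) ` PS xs c"
    proof (cases t)
      case (PT l th) then show ?thesis using v by simp
    next
      case (PAnd A th ts) then show ?thesis using v not_and_ors[OF nors] by simp
    next
      case (POr B th x p t')
      then have h: "B = n" "(n, x, p) \<in> R n" "psym t' = x" "th = ptheta t'" "pvalid GG t'"
        using v pvalid_POr by auto
      then have c: "x = Nt c" "p = 1" using Rn by auto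
      have "t' \<in> PS xs c" using h c v POr scn by (simp add: PS_def)
      then show ?thesis using POr h c by auto
    qed
  next
    fix t assume "t \<in> (\<lambda>t. POr n (ptheta t) (Nt c) 1 t) ` PS xs c"
    then obtain t' where c: "t' \<in> PS xs c" and t: "t = POr n (ptheta t') (Nt c) 1 t'"
      by auto
    have "pvalid GG t" unfolding t pvalid_POr using nors n Rn c by (auto simp: PS_def)
    then show "t \<in> PS xs n" using t c scn by (simp add: PS_def)
  qed
qed

lemma PS_and:
  assumes n: "n \<in> N" and l: "lbl n = spn_node.Prod cs" and len: "2 \<le> length cs"
  shows "PS xs n = PAnd n 0 ` {ts. list_all2 (\<lambda>c t. t \<in> PS xs c) cs ts}"
proof -
  have nand: "n \<in> ands" using n l len by (auto simp: ands_def)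
  have nno: "n \<notin> ors" using nand by (auto simp: ors_def)
  have disj: "sorted_wrt (\<lambda>a b. sc a \<inter> sc b = {}) cs" using prod_disj[OF n l] .
  have scn: "sc n = (\<Union>c\<in>set cs. sc c)" using sc_prod[OF n l] .
  have key: "(distinct (concat (map pleaves ts)) \<and> set (concat (map pleaves ts)) = DA xs (sc n))
     \<longleftrightarrow> list_all2 (\<lambda>c t. distinct (pleaves t) \<and> set (pleaves t) = DA xs (sc c)) cs ts"
    if L: "length ts = length cs" "\<forall>k<length cs. pvalid GG (ts ! k) \<and> psym (ts ! k) = Nt (cs ! k)" for ts
  proof -
    have "list_all2 (\<lambda>c t. fst ` fst ` set (pleaves t) \<subseteq> sc c) cs ts"
      unfolding l2_nth using L vars_sub by auto
    from concat_iff[OF disj this] show ?thesis unfolding scn .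
  qed
  show ?thesis
  proof (rule set_eqI, rule iffI)
    fix t assume t: "t \<in> PS xs n"
    then have v: "pvalid GG t" "psym t = Nt n" "distinct (pleaves t)" "set (pleaves t) = DA xs (sc n)"
      by (auto simp: PS_def)
    show "t \<in> PAnd n 0 ` {ts. list_all2 (\<lambda>c t. t \<in> PS xs c) cs ts}"
    proof (cases t)
      case (PT l th) then show ?thesis using v by simp
    next
      case (POr B th x p t') then show ?thesis using v nno pvalid_POr by simp
    next
      case (PAnd A th ts)
      then have h: "A = n" "map psym ts = map Nt cs" "th = 0" "list_all (pvalid GG) ts"
        using v pvalid_PAnd l by auto
      have L1: "length ts = length cs" using h(2) by (metis length_map)
      have L2: "\<forall>k<length cs. pvalid GG (ts ! k) \<and> psym (ts ! k) = Nt (cs ! k)"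
      proof (intro allI impI conjI)
        fix k assume k: "k < length cs"
        show "pvalid GG (ts ! k)" using h(4) k L1 by (simp add: list_all_length)
        have "map psym ts ! k = map Nt cs ! k" using h(2) by simp
        then show "psym (ts ! k) = Nt (cs ! k)" using k L1 by simp
      qed
      have "list_all2 (\<lambda>c t. distinct (pleaves t) \<and> set (pleaves t) = DA xs (sc c)) cs ts"
        using key[OF L1 L2] v PAnd by simp
      then have "list_all2 (\<lambda>c t. t \<in> PS xs c) cs ts"
        using L1 L2 unfolding l2_nth by (auto simp: PS_def)
      then show ?thesis using PAnd h by auto
    qed
  next
    fix t assume "t \<in> PAnd n 0 ` {ts. list_all2 (\<lambda>c t. t \<in> PS xs c) cs ts}"
    then obtain ts where ts: "list_all2 (\<lambda>c t. t \<in> PS xs c) cs ts" and t: "t = PAnd n 0 ts" by auto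
    have L1: "length ts = length cs" using ts by (simp add: l2_nth)
    have L2: "\<forall>k<length cs. pvalid GG (ts ! k) \<and> psym (ts ! k) = Nt (cs ! k)"
      using ts unfolding l2_nth by (auto simp: PS_def)
    have L3: "list_all2 (\<lambda>c t. distinct (pleaves t) \<and> set (pleaves t) = DA xs (sc c)) cs ts"
      using ts unfolding l2_nth by (auto simp: PS_def)
    have m: "map psym ts = map Nt cs" by (rule nth_equalityI) (use L1 L2 in auto)
    have "list_all (pvalid GG) ts" using L1 L2 by (auto simp: list_all_length)
    then have "pvalid GG t" using nand m l unfolding t pvalid_PAnd by simp
    moreover have "distinct (concat (map pleaves ts)) \<and> set (concat (map pleaves ts)) = DA xs (sc n)"
      using key[OF L1 L2] L3 by simp
    ultimately show "t \<in> PS xs n" using t by (simp add: PS_def)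
  qed
qed

lemma main_ind:
  assumes xs: "length xs = d"
  shows "n \<in> N \<Longrightarrow> finite (PS xs n) \<and> Zs n * (\<Sum>t\<in>PS xs n. pprob t) = spn_value S xs n"
proof (induction n rule: wf_ind)
  case (step n)
  have IH: "finite (PS xs c) \<and> Zs c * (\<Sum>t\<in>PS xs c. pprob t) = spn_value S xs c"
    if "c \<in> set (node_children (lbl n))" for c
    using step(2)[OF that ch_nodes[OF step(1) that]] .
  show ?case
  proof (cases "lbl n")
    case (Leaf i b)
    show ?thesis using PS_leaf[OF step(1) Leaf, of xs] Zs_leaf[OF step(1) Leaf] val_leaf[OF Leaf, of xs]
      by simp
  next
    case (Sum cs)
    let ?C = "fst ` set cs"
    let ?f = "\<lambda>(c, t). POr n (ptheta t) (Nt c) (pr n c) t"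
    have finc: "finite (PS xs c)" and Qc: "Zs c * (\<Sum>t\<in>PS xs c. pprob t) = spn_value S xs c"
      if "c \<in> ?C" for c using IH[of c] that Sum by auto
    have fin: "finite (SIGMA c:?C. PS xs c)" using finc by (intro finite_SigmaI) auto
    have inj: "inj_on ?f (SIGMA c:?C. PS xs c)" by (auto simp: inj_on_def)
    have Q: "(\<Sum>t\<in>PS xs n. pprob t) = (\<Sum>c\<in>?C. pr n c * (\<Sum>t\<in>PS xs c. pprob t))"
    proof -
      have "(\<Sum>t\<in>PS xs n. pprob t) = (\<Sum>p\<in>(SIGMA c:?C. PS xs c). pprob (?f p))"
        unfolding PS_sum[OF step(1) Sum] by (rule sum.reindex[OF inj, unfolded comp_def])
      also have "\<dots> = (\<Sum>(c, t)\<in>(SIGMA c:?C. PS xs c). pr n c * pprob t)"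
        by (rule sum.cong) auto
      also have "\<dots> = (\<Sum>c\<in>?C. \<Sum>t\<in>PS xs c. pr n c * pprob t)"
        by (rule sum.Sigma[symmetric]) (use finc in auto)
      also have "\<dots> = (\<Sum>c\<in>?C. pr n c * (\<Sum>t\<in>PS xs c. pprob t))"
        by (simp add: sum_distrib_left)
      finally show ?thesis .
    qed
    have "Zs n * (\<Sum>t\<in>PS xs n. pprob t) = spn_value S xs n"
    proof (cases "Zs n = 0")
      case True
      then show ?thesis using Zs_zero[OF step(1) True xs] by simp
    next
      case False
      have zp: "Zs n * pr n c = (\<Sum>j | j \<in> {..<length cs} \<and> fst (cs ! j) = c. snd (cs ! j) * Zs c)" for c
        using False by (simp add: pr_def Sum)
      have "Zs n * (\<Sum>t\<in>PS xs n. pprob t) = (\<Sum>c\<in>?C. (Zs n * pr n c) * (\<Sum>t\<in>PS xs c. pprob t))"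
        unfolding Q by (simp add: sum_distrib_left mult.assoc)
      also have "\<dots> = (\<Sum>c\<in>?C. \<Sum>j | j \<in> {..<length cs} \<and> fst (cs ! j) = c. snd (cs ! j) * (Zs c * (\<Sum>t\<in>PS xs c. pprob t)))"
        unfolding zp by (simp add: sum_distrib_right mult.assoc)
      also have "\<dots> = (\<Sum>c\<in>?C. \<Sum>j | j \<in> {..<length cs} \<and> fst (cs ! j) = c. snd (cs ! j) * spn_value S xs (fst (cs ! j)))"
      proof (rule sum.cong[OF refl], rule sum.cong[OF refl])
        fix c j assume c: "c \<in> ?C" and j: "j \<in> {j. j \<in> {..<length cs} \<and> fst (cs ! j) = c}"
        show "snd (cs ! j) * (Zs c * (\<Sum>t\<in>PS xs c. pprob t)) = snd (cs ! j) * spn_value S xs (fst (cs ! j))"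
          using Qc[OF c] j by simp
      qed
      also have "\<dots> = (\<Sum>j<length cs. snd (cs ! j) * spn_value S xs (fst (cs ! j)))"
        by (subst sum.group) (auto intro!: imageI nth_mem)
      also have "\<dots> = spn_value S xs n" using val_sum[OF step(1) Sum] by simp
      finally show ?thesis .
    qed
    moreover have "finite (PS xs n)" unfolding PS_sum[OF step(1) Sum] using fin by simp
    ultimately show ?thesis by simp
  next
    case (Prod cs)
    have finc: "finite (PS xs c)" and Qc: "Zs c * (\<Sum>t\<in>PS xs c. pprob t) = spn_value S xs c"
      if "c \<in> set cs" for c using IH[of c] that Prod by auto
    have ne: "cs \<noteq> []" using prod_ne[OF step(1) Prod] .
    show ?thesis
    proof (cases "length cs = 1")
      case True
      then obtain c where cs: "cs = [c]" by (cases cs) (auto simp: length_Suc_conv)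
      have l1: "lbl n = spn_node.Prod [c]" using Prod cs by simp
      have inj: "inj_on (\<lambda>t. POr n (ptheta t) (Nt c) 1 t) (PS xs c)" by (auto simp: inj_on_def)
      have "(\<Sum>t\<in>PS xs n. pprob t) = (\<Sum>t\<in>PS xs c. pprob t)"
        unfolding PS_prod1[OF step(1) l1] by (subst sum.reindex[OF inj]) simp
      moreover have "Zs n = Zs c" using Zs_prod[OF step(1) l1] by simp
      moreover have "spn_value S xs n = spn_value S xs c" using val_prod[OF step(1) l1] by simp
      moreover have "finite (PS xs n)" unfolding PS_prod1[OF step(1) l1] using finc cs by simp
      ultimately show ?thesis using Qc cs by simp
    next
      case False
      moreover have "0 < length cs" using ne by simp
      ultimately have len: "2 \<le> length cs" by linarith
      have inj: "inj_on (PAnd n 0) {ts. list_all2 (\<lambda>c t. t \<in> PS xs c) cs ts}" by (auto simp: inj_on_def)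
      have SL: "finite {ts. list_all2 (\<lambda>c t. t \<in> PS xs c) cs ts} \<and>
        (\<Sum>ts\<in>{ts. list_all2 (\<lambda>c t. t \<in> PS xs c) cs ts}. prod_list (map pprob ts)) = prod_list (map (\<lambda>c. \<Sum>t\<in>PS xs c. pprob t) cs)"
        by (rule sum_lists) (use finc in auto)
      have "(\<Sum>t\<in>PS xs n. pprob t) = prod_list (map (\<lambda>c. \<Sum>t\<in>PS xs c. pprob t) cs)"
        unfolding PS_and[OF step(1) Prod len] using SL by (subst sum.reindex[OF inj]) simp
      then have "Zs n * (\<Sum>t\<in>PS xs n. pprob t) = prod_list (map (\<lambda>c. Zs c * (\<Sum>t\<in>PS xs c. pprob t)) cs)"
        using Zs_prod[OF step(1) Prod] prod_list_mult by simp
      also have "\<dots> = prod_list (map (spn_value S xs) cs)"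
        using Qc by (metis (no_types, lifting) map_eq_conv)
      also have "\<dots> = spn_value S xs n" using val_prod[OF step(1) Prod] by simp
      finally show ?thesis using SL unfolding PS_and[OF step(1) Prod len] by simp
    qed
  qed
qed

lemma final:
  assumes xs: "length xs = d" and nz: "Zs (spn_root S) \<noteq> 0"
  shows "aog_marginal GG (assignment_sample d xs) = spn_prob S d xs"
proof -
  have samp: "assignment_sample d xs = DA xs (sc (spn_root S))"
    unfolding root_sc by (auto simp: assignment_sample_def DA_def)
  have P: "aog_parses GG (assignment_sample d xs) = PS xs (spn_root S)"
    unfolding samp by (simp add: aog_parses_def PS_def)
  have M: "finite (PS xs (spn_root S)) \<and> Zs (spn_root S) * (\<Sum>t\<in>PS xs (spn_root S). pprob t) = spn_value S xs (spn_root S)"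
    by (rule main_ind[OF xs rootN])
  have "aog_marginal GG (assignment_sample d xs) = (\<Sum>t\<in>PS xs (spn_root S). pprob t)"
    unfolding aog_marginal_def P using M by simp
  also have "\<dots> = spn_value S xs (spn_root S) / Zs (spn_root S)"
    using M nz by (simp add: field_simps)
  also have "\<dots> = spn_prob S d xs" unfolding spn_prob_def Zs_root by simp
  finally show ?thesis .
qed

lemma spn_size_pos: "1 \<le> spn_size S"
proof -
  have "card N \<noteq> 0" using finN rootN by auto
  then show ?thesis unfolding spn_size_def by simp
qed

end

definition G0 :: "nat aog" where "G0 = \<lparr>aog_terms = {(0, True), (0, False)}, aog_ands = {0}, aog_ors = {},
   aog_start = 0, aog_and_rule = (\<lambda>_. ([Tm (0, True), Tm (0, False)], \<lambda>_. False, \<lambda>_. 0)),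
   aog_or_rules = {}\<rparr>"

lemma G0_wf: "aog_wf G0"
  by (simp add: aog_wf_def G0_def aog_symbols_def)

lemma G0_size: "aog_size G0 = 5"
  by (simp add: aog_size_def G0_def)

lemma G0_parses: "aog_parses G0 D = {}"
proof -
  have "\<not> (pvalid G0 t \<and> psym t = Nt 0)" for t
    by (cases t) (auto simp: G0_def)
  then show ?thesis by (auto simp: aog_parses_def G0_def)
qed

theorem mainTheorem9:
  "\<exists>c::real. \<forall>(S::spn) (d::nat).
     spn_wf S d \<and> spn_valid S \<and> spn_decomposable S \<longrightarrow>
     (\<exists>G :: nat aog. aog_wf G \<and>
        real (aog_size G) \<le> c * real (spn_size S) \<and>
        (\<forall>xs. length xs = d \<longrightarrow>
           aog_marginal G (assignment_sample d xs) = spn_prob S d xs))"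
proof (intro exI[of _ 5] allI impI)
  fix S d assume h: "spn_wf S d \<and> spn_valid S \<and> spn_decomposable S"
  interpret spnc S d using h by unfold_locales auto
  have pos: "1 \<le> real (spn_size S)" using spn_size_pos by simp
  show "\<exists>G :: nat aog. aog_wf G \<and> real (aog_size G) \<le> 5 * real (spn_size S) \<and>
        (\<forall>xs. length xs = d \<longrightarrow> aog_marginal G (assignment_sample d xs) = spn_prob S d xs)"
  proof (cases "Zs (spn_root S) = 0")
    case False
    show ?thesis
    proof (intro exI[of _ GG] conjI allI impI)
      show "aog_wf GG" by (rule wf_GG)
      show "real (aog_size GG) \<le> 5 * real (spn_size S)" using size_GG pos by linarith
      fix xs :: "bool list" assume "length xs = d"
      then show "aog_marginal GG (assignment_sample d xs) = spn_prob S d xs" using final False by blast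
    qed
  next
    case True
    show ?thesis
    proof (intro exI[of _ G0] conjI allI impI)
      show "aog_wf G0" by (rule G0_wf)
      show "real (aog_size G0) \<le> 5 * real (spn_size S)" using G0_size pos by simp
      fix xs :: "bool list" assume "length xs = d"
      have "spn_prob S d xs = 0" unfolding spn_prob_def using True Zs_root by simp
      then show "aog_marginal G0 (assignment_sample d xs) = spn_prob S d xs"
        by (simp add: aog_marginal_def G0_parses)
    qed
  qed
qed

end
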